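(* Let $R=\bigoplus_{s\in S}R_s$ be a strongly graded pseudo-unitary $S$-graded ring inducing $S$. Then $R$ is graded von Neumann regular if and only if: (a) for every nonzero $x\in H_R$ there exists $y\in H_R$ such that $xy$ is a nonzero homogeneous element whose degree is an idempotent of $S$; and (b) $R_e$ is a von Neumann regular ring for every idempotent $e\in S$.
   Context: Rings are associative, not necessarily unital. $S$-graded ring inducing $S$: $S$ a partial groupoid, $R=\bigoplus_{s\in S}R_s$, $R_sR_t\subseteq R_{st}$ when $st$ defined, $R_sR_t\ne0$ implies $st$ defined. Convention: $0\in S$, $R_0=0$, $S\setminus\{0\}=\{s:R_s\ne0\}$, undefined products set to $0$, $0$ absorbing. $H_R=\bigcup_sR_s$; $\deg(x)$ of nonzero homogeneous $x$ is the unique $s$ with $x\in R_s$. $R_sR_t$ denotes the additive subgroup generated by products. $R$ is strongly graded if $R_sR_t=R_{st}$ for all $s,t\in S$. $S$ cancellative: $0\ne su=tu$ or $0\ne us=ut$ implies $s=t$. $I(S)$: idempotents of $S$. $R$ is pseudo-unitary if $S$ is cancellative, for every $e\in I(S)$ the ring $R_e$ has a unity $1_e$, and for every $x\in H_R$ there exist $e,f\in I(S)$ with $1_ex=x=x1_f$. $R$ is graded von Neumann regular if $x\in xRx$ for all $x\in H_R$. *)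

theory Defs
  imports Main
begin

inductive_set addsub_prod :: "'a::ring set \<Rightarrow> 'a set \<Rightarrow> 'a set"
  for A B where
  zero: "0 \<in> addsub_prod A B"
| prod: "a \<in> A \<Longrightarrow> b \<in> B \<Longrightarrow> a * b \<in> addsub_prod A B"
| diff: "x \<in> addsub_prod A B \<Longrightarrow> y \<in> addsub_prod A B \<Longrightarrow> x - y \<in> addsub_prod A B"

text \<open>The partial groupoid S is a carrier set with an operation mul, in which undefined
products are set to the absorbing element z (the "0" of S).
Rs s is the homogeneous component of degree s; the ring R is the whole type.\<close>

definition graded_inducing ::
  "'s set \<Rightarrow> ('s \<Rightarrow> 's \<Rightarrow> 's) \<Rightarrow> 's \<Rightarrow> ('s \<Rightarrow> 'a::ring set) \<Rightarrow> bool" where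
  "graded_inducing S mul z Rs \<longleftrightarrow>
     z \<in> S \<and>
     (\<forall>s\<in>S. \<forall>t\<in>S. mul s t \<in> S) \<and>
     (\<forall>s\<in>S. mul z s = z \<and> mul s z = z) \<and>
     (\<forall>s\<in>S. 0 \<in> Rs s \<and> (\<forall>x\<in>Rs s. \<forall>y\<in>Rs s. x - y \<in> Rs s)) \<and>
     Rs z = {0} \<and>
     (\<forall>s\<in>S. s \<noteq> z \<longleftrightarrow> Rs s \<noteq> {0}) \<and>
     (\<forall>x::'a. \<exists>!f::'s \<Rightarrow> 'a. (\<forall>s. s \<notin> S \<longrightarrow> f s = 0) \<and> (\<forall>s\<in>S. f s \<in> Rs s) \<and>
          finite {s. f s \<noteq> 0} \<and> x = (\<Sum>s\<in>{s. f s \<noteq> 0}. f s)) \<and>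
     (\<forall>s\<in>S. \<forall>t\<in>S. \<forall>x\<in>Rs s. \<forall>y\<in>Rs t. x * y \<in> Rs (mul s t))"

definition homog :: "'s set \<Rightarrow> ('s \<Rightarrow> 'a set) \<Rightarrow> 'a set" where
  "homog S Rs = (\<Union>s\<in>S. Rs s)"

definition deg :: "'s set \<Rightarrow> ('s \<Rightarrow> 'a set) \<Rightarrow> 'a \<Rightarrow> 's" where
  "deg S Rs x = (THE s. s \<in> S \<and> x \<in> Rs s)"

definition idems :: "'s set \<Rightarrow> ('s \<Rightarrow> 's \<Rightarrow> 's) \<Rightarrow> 's set" where
  "idems S mul = {e\<in>S. mul e e = e}"

definition strongly_graded ::
  "'s set \<Rightarrow> ('s \<Rightarrow> 's \<Rightarrow> 's) \<Rightarrow> ('s \<Rightarrow> 'a::ring set) \<Rightarrow> bool" where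
  "strongly_graded S mul Rs \<longleftrightarrow> (\<forall>s\<in>S. \<forall>t\<in>S. addsub_prod (Rs s) (Rs t) = Rs (mul s t))"

definition cancellative :: "'s set \<Rightarrow> ('s \<Rightarrow> 's \<Rightarrow> 's) \<Rightarrow> 's \<Rightarrow> bool" where
  "cancellative S mul z \<longleftrightarrow>
     (\<forall>s\<in>S. \<forall>t\<in>S. \<forall>u\<in>S.
        ((mul s u \<noteq> z \<and> mul s u = mul t u) \<or> (mul u s \<noteq> z \<and> mul u s = mul u t)) \<longrightarrow> s = t)"

definition is_unity :: "'a::ring set \<Rightarrow> 'a \<Rightarrow> bool" where
  "is_unity A u \<longleftrightarrow> u \<in> A \<and> (\<forall>x\<in>A. u * x = x \<and> x * u = x)"

definition pseudo_unitary ::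
  "'s set \<Rightarrow> ('s \<Rightarrow> 's \<Rightarrow> 's) \<Rightarrow> 's \<Rightarrow> ('s \<Rightarrow> 'a::ring set) \<Rightarrow> bool" where
  "pseudo_unitary S mul z Rs \<longleftrightarrow>
     cancellative S mul z \<and>
     (\<forall>e\<in>idems S mul. \<exists>u. is_unity (Rs e) u) \<and>
     (\<forall>x\<in>homog S Rs. \<exists>e\<in>idems S mul. \<exists>f\<in>idems S mul. \<exists>u v.
        is_unity (Rs e) u \<and> is_unity (Rs f) v \<and> u * x = x \<and> x * v = x)"

definition graded_vnr :: "'s set \<Rightarrow> ('s \<Rightarrow> 'a::ring set) \<Rightarrow> bool" where
  "graded_vnr S Rs \<longleftrightarrow> (\<forall>x\<in>homog S Rs. \<exists>r. x = x * r * x)"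

definition vnr_subring :: "'a::ring set \<Rightarrow> bool" where
  "vnr_subring A \<longleftrightarrow> (\<forall>x\<in>A. \<exists>r\<in>A. x = x * r * x)"

end

theory Submission
  imports Defs
begin

definition dec :: "'s set \<Rightarrow> ('s \<Rightarrow> 'a::ring set) \<Rightarrow> 'a \<Rightarrow> ('s \<Rightarrow> 'a) \<Rightarrow> bool" where
  "dec S Rs x f \<longleftrightarrow> (\<forall>s. s \<notin> S \<longrightarrow> f s = 0) \<and> (\<forall>s\<in>S. f s \<in> Rs s) \<and>
          finite {s. f s \<noteq> 0} \<and> x = (\<Sum>s\<in>{s. f s \<noteq> 0}. f s)"

context
  fixes S :: "'s set" and mul :: "'s \<Rightarrow> 's \<Rightarrow> 's" and z :: 's
    and Rs :: "'s \<Rightarrow> 'a::ring set"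
  assumes gi: "graded_inducing S mul z Rs"
begin

lemma gi_zero: "s \<in> S \<Longrightarrow> 0 \<in> Rs s"
  using gi by (simp add: graded_inducing_def)

lemma gi_diff: "s \<in> S \<Longrightarrow> x \<in> Rs s \<Longrightarrow> y \<in> Rs s \<Longrightarrow> x - y \<in> Rs s"
  using gi by (simp add: graded_inducing_def)

lemma gi_add: "s \<in> S \<Longrightarrow> x \<in> Rs s \<Longrightarrow> y \<in> Rs s \<Longrightarrow> x + y \<in> Rs s"
proof -
  assume a: "s \<in> S" "x \<in> Rs s" "y \<in> Rs s"
  have "0 - y \<in> Rs s" using a gi_diff gi_zero by blast
  then have "x - (0 - y) \<in> Rs s" using a gi_diff by blast
  then show ?thesis by simp
qed

lemma gi_sum: "finite A \<Longrightarrow> s \<in> S \<Longrightarrow> (\<forall>a\<in>A. g a \<in> Rs s) \<Longrightarrow> sum g A \<in> Rs s"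
  by (induction A rule: finite_induct) (auto intro: gi_add gi_zero)

lemma gi_mul: "s \<in> S \<Longrightarrow> t \<in> S \<Longrightarrow> x \<in> Rs s \<Longrightarrow> y \<in> Rs t \<Longrightarrow> x * y \<in> Rs (mul s t)"
  using gi by (simp add: graded_inducing_def)

lemma gi_mulS: "s \<in> S \<Longrightarrow> t \<in> S \<Longrightarrow> mul s t \<in> S"
  using gi by (simp add: graded_inducing_def)

lemma gi_Rz: "Rs z = {0}"
  using gi unfolding graded_inducing_def by (elim conjE)

lemma gi_unique: "\<forall>x. \<exists>!f. dec S Rs x f"
  using gi unfolding graded_inducing_def dec_def by (elim conjE)

lemma gi_nz: "x \<in> Rs s \<Longrightarrow> x \<noteq> 0 \<Longrightarrow> s \<noteq> z"
  using gi_Rz by auto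

lemma gi_ex: "\<exists>f. dec S Rs x f"
  using gi_unique by blast

lemma gi_uniq: "dec S Rs x f \<Longrightarrow> dec S Rs x g \<Longrightarrow> f = g"
  using gi_unique by blast

lemma gi_single: "s \<in> S \<Longrightarrow> x \<in> Rs s \<Longrightarrow> dec S Rs x (\<lambda>u. if u = s then x else 0)"
proof -
  assume a: "s \<in> S" "x \<in> Rs s"
  have supp: "{u. (if u = s then x else 0) \<noteq> 0} = (if x = 0 then {} else {s})" by auto
  show ?thesis unfolding dec_def using a gi_zero supp by auto
qed

lemma deg_unique: "p \<in> S \<Longrightarrow> q \<in> S \<Longrightarrow> x \<in> Rs p \<Longrightarrow> x \<in> Rs q \<Longrightarrow> x \<noteq> 0 \<Longrightarrow> p = q"
proof -
  assume a: "p \<in> S" "q \<in> S" "x \<in> Rs p" "x \<in> Rs q" "x \<noteq> 0"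
  have "(\<lambda>u. if u = p then x else 0) = (\<lambda>u. if u = q then x else 0)"
    using gi_uniq gi_single a by blast
  then have "(if p = p then x else 0) = (if p = q then x else 0)" by metis
  then show ?thesis using a by (auto split: if_splits)
qed

lemma deg_eq: "p \<in> S \<Longrightarrow> x \<in> Rs p \<Longrightarrow> x \<noteq> 0 \<Longrightarrow> deg S Rs x = p"
  unfolding deg_def by (rule the_equality) (auto intro: deg_unique)

lemma assoc_deg:
  "p \<in> S \<Longrightarrow> q \<in> S \<Longrightarrow> r \<in> S \<Longrightarrow> a \<in> Rs p \<Longrightarrow> b \<in> Rs q \<Longrightarrow> c \<in> Rs r \<Longrightarrow> a * b * c \<noteq> 0
   \<Longrightarrow> mul (mul p q) r = mul p (mul q r)"
proof -
  assume a: "p \<in> S" "q \<in> S" "r \<in> S" "a \<in> Rs p" "b \<in> Rs q" "c \<in> Rs r" "a * b * c \<noteq> 0"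
  have 1: "a * b * c \<in> Rs (mul (mul p q) r)" using a gi_mul gi_mulS by metis
  have 2: "a * (b * c) \<in> Rs (mul p (mul q r))" using a gi_mul gi_mulS by metis
  show ?thesis using deg_unique[OF _ _ 1] 2 a gi_mulS by (metis mult.assoc)
qed

lemma component:
  assumes fin: "finite T" and hg: "\<forall>t\<in>T. h t \<in> S \<and> g t \<in> Rs (h t)"
    and s: "s \<in> S" "x \<in> Rs s" and xs: "x = sum g T"
  shows "x = sum g {t\<in>T. h t = s}"
proof -
  define F where "F u = (if u \<in> S then sum g {t\<in>T. h t = u} else 0)" for u
  have supp: "{u. F u \<noteq> 0} \<subseteq> h ` T"
  proof
    fix u assume "u \<in> {u. F u \<noteq> 0}"
    then have "sum g {t\<in>T. h t = u} \<noteq> 0" unfolding F_def by (auto split: if_splits)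
    then have "{t\<in>T. h t = u} \<noteq> {}" by (metis sum.empty)
    then show "u \<in> h ` T" by auto
  qed
  have finS: "finite {u. F u \<noteq> 0}" using supp fin finite_subset by blast
  have "(\<Sum>u\<in>{u. F u \<noteq> 0}. F u) = (\<Sum>u\<in>h ` T. F u)"
    by (rule sum.mono_neutral_left) (use fin supp in auto)
  also have "\<dots> = (\<Sum>u\<in>h ` T. sum g {t\<in>T. h t = u})"
    by (rule sum.cong) (use hg F_def in auto)
  also have "\<dots> = sum g T" using sum.image_gen[OF fin, of g h] by simp
  finally have sumF: "(\<Sum>u\<in>{u. F u \<noteq> 0}. F u) = x" using xs by simp
  have "dec S Rs x F" unfolding dec_def
  proof (intro conjI)
    show "\<forall>s. s \<notin> S \<longrightarrow> F s = 0" unfolding F_def by auto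
    show "\<forall>s\<in>S. F s \<in> Rs s" unfolding F_def using hg fin by (auto intro!: gi_sum)
  qed (use finS sumF in auto)
  then have "F = (\<lambda>u. if u = s then x else 0)" using gi_uniq gi_single s by blast
  then have "F s = x" by metis
  then show ?thesis using s F_def by simp
qed

end

lemma addsub_zero: "p \<in> addsub_prod A B \<Longrightarrow> (\<forall>a\<in>A. \<forall>b\<in>B. a * b = 0) \<Longrightarrow> p = 0"
  by (induction rule: addsub_prod.induct) auto

lemma addsub_left: "p \<in> addsub_prod A B \<Longrightarrow> (\<forall>a\<in>A. \<forall>b\<in>B. c * (a * b) = 0) \<Longrightarrow> c * p = 0"
  by (induction rule: addsub_prod.induct) (auto simp: right_diff_distrib)

lemma addsub_right: "p \<in> addsub_prod A B \<Longrightarrow> (\<forall>a\<in>A. \<forall>b\<in>B. (a * b) * c = 0) \<Longrightarrow> p * c = 0"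
  by (induction rule: addsub_prod.induct) (auto simp: left_diff_distrib)

lemma idem_combine:
  fixes e1 e2 :: "'a::ring"
  assumes i1: "e1 * e1 = e1" and i2: "e2 * e2 = e2"
    and b: "b = e2 - e1 * e2" and w: "b = b * w * b"
    and f: "f = b * w" and g: "g = e1 + f - f * e1"
  shows "g * g = g" "g * e1 = e1" "g * e2 = e2"
proof -
  have ff: "f * f = f" using w f by (metis mult.assoc)
  have e1b: "e1 * b = 0" using b i1 by (simp add: right_diff_distrib mult.assoc[symmetric])
  have e1f: "e1 * f = 0" using e1b f by (metis mult.assoc mult_zero_left)
  have "g * e1 = e1 * e1 + f * e1 - f * e1 * e1" using g by (simp add: left_diff_distrib distrib_right)
  then have ge1: "g * e1 = e1" using i1 by (simp add: mult.assoc)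
  have "g * f = e1 * f + f * f - f * e1 * f" using g by (simp add: left_diff_distrib distrib_right)
  then have gf: "g * f = f" using e1f ff by (simp add: mult.assoc)
  show "g * g = g"
  proof -
    have "g * g = g * e1 + g * f - g * f * e1" using g by (simp add: right_diff_distrib distrib_left mult.assoc)
    then show ?thesis using ge1 gf g by simp
  qed
  show "g * e1 = e1" by (rule ge1)
  have bf: "b = f * b" using w f by (metis mult.assoc)
  have gb: "g * b = b" using bf gf by (metis mult.assoc)
  have "e2 = e1 * e2 + b" using b by simp
  then have "g * e2 = g * e1 * e2 + g * b" by (metis distrib_left mult.assoc)
  then show "g * e2 = e2" using ge1 gb b by simp
qed

theorem theorem4p17:
  fixes S :: "'s set" and mul :: "'s \<Rightarrow> 's \<Rightarrow> 's" and z :: 's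
    and Rs :: "'s \<Rightarrow> 'a::ring set"
  assumes "graded_inducing S mul z Rs"
    and "strongly_graded S mul Rs"
    and "pseudo_unitary S mul z Rs"
  shows "graded_vnr S Rs \<longleftrightarrow>
     ((\<forall>x\<in>homog S Rs. x \<noteq> 0 \<longrightarrow>
         (\<exists>y\<in>homog S Rs. x * y \<noteq> 0 \<and> x * y \<in> homog S Rs \<and>
             deg S Rs (x * y) \<in> idems S mul)) \<and>
      (\<forall>e\<in>idems S mul. vnr_subring (Rs e)))"
proof -
  note gi = assms(1)
  have SG: "\<And>s t. s \<in> S \<Longrightarrow> t \<in> S \<Longrightarrow> addsub_prod (Rs s) (Rs t) = Rs (mul s t)"
    using assms(2) unfolding strongly_graded_def by blast
  have canc: "cancellative S mul z" and
    PU: "\<forall>x\<in>homog S Rs. \<exists>e\<in>idems S mul. \<exists>f\<in>idems S mul. \<exists>u v.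
        is_unity (Rs e) u \<and> is_unity (Rs f) v \<and> u * x = x \<and> x * v = x"
    using assms(3) unfolding pseudo_unitary_def by blast+
  have cancR: "\<And>a b c. a \<in> S \<Longrightarrow> b \<in> S \<Longrightarrow> c \<in> S \<Longrightarrow> mul a c \<noteq> z \<Longrightarrow> mul a c = mul b c \<Longrightarrow> a = b"
    using canc unfolding cancellative_def by blast
  have cancL: "\<And>a b c. a \<in> S \<Longrightarrow> b \<in> S \<Longrightarrow> c \<in> S \<Longrightarrow> mul c a \<noteq> z \<Longrightarrow> mul c a = mul c b \<Longrightarrow> a = b"
    using canc unfolding cancellative_def by blast
  have homI: "\<And>x s. s \<in> S \<Longrightarrow> x \<in> Rs s \<Longrightarrow> x \<in> homog S Rs"
    unfolding homog_def by blast
  have homE: "\<And>x. x \<in> homog S Rs \<Longrightarrow> \<exists>s\<in>S. x \<in> Rs s"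
    unfolding homog_def by blast
  have idemsD: "\<And>e. e \<in> idems S mul \<Longrightarrow> e \<in> S \<and> mul e e = e"
    unfolding idems_def by blast
  have decomp: "\<exists>f T. finite T \<and> T \<subseteq> S \<and> (\<forall>t\<in>T. f t \<in> Rs t) \<and>
        x = (\<Sum>t\<in>{t\<in>T. mul (mul s t) s = s}. x * f t * x)"
    if s: "s \<in> S" "x \<in> Rs s" and r: "x = x * r * x" for x s r
  proof -
    obtain f where f: "dec S Rs r f" using gi_ex[OF gi] by blast
    define T where "T = {t. f t \<noteq> 0}"
    have fin: "finite T" and rT: "r = sum f T" and TS: "T \<subseteq> S" and fR: "\<forall>t\<in>T. f t \<in> Rs t"
      using f unfolding dec_def T_def by auto
    have "x * r * x = (\<Sum>t\<in>T. x * f t * x)" unfolding rT by (simp add: sum_distrib_left sum_distrib_right)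
    then have xsum: "x = (\<Sum>t\<in>T. x * f t * x)" using r by simp
    have hg: "\<forall>t\<in>T. mul (mul s t) s \<in> S \<and> x * f t * x \<in> Rs (mul (mul s t) s)"
    proof
      fix t assume tT: "t \<in> T"
      then have tS: "t \<in> S" using TS by blast
      have "x * f t \<in> Rs (mul s t)" using gi_mul[OF gi s(1) tS s(2)] fR tT by blast
      then show "mul (mul s t) s \<in> S \<and> x * f t * x \<in> Rs (mul (mul s t) s)"
        using gi_mul[OF gi _ s(1) _ s(2)] gi_mulS[OF gi] s(1) tS by blast
    qed
    have "x = (\<Sum>t\<in>{t\<in>T. mul (mul s t) s = s}. x * f t * x)"
      by (rule component[OF gi fin hg s xsum])
    then show ?thesis using fin TS fR by blast
  qed
  show ?thesis
  proof
    assume V: "graded_vnr S Rs"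
    show "(\<forall>x\<in>homog S Rs. x \<noteq> 0 \<longrightarrow>
         (\<exists>y\<in>homog S Rs. x * y \<noteq> 0 \<and> x * y \<in> homog S Rs \<and>
             deg S Rs (x * y) \<in> idems S mul)) \<and>
      (\<forall>e\<in>idems S mul. vnr_subring (Rs e))"
    proof (intro conjI ballI impI)
      fix x assume xh: "x \<in> homog S Rs" and x0: "x \<noteq> 0"
      obtain s where s: "s \<in> S" "x \<in> Rs s" using homE xh by blast
      obtain r where r: "x = x * r * x" using V xh unfolding graded_vnr_def by blast
      obtain f T where fT: "finite T" "T \<subseteq> S" "\<forall>t\<in>T. f t \<in> Rs t"
        and xs: "x = (\<Sum>t\<in>{t\<in>T. mul (mul s t) s = s}. x * f t * x)"
        using decomp[OF s r] by blast
      have "\<exists>t\<in>{t\<in>T. mul (mul s t) s = s}. x * f t * x \<noteq> 0"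
      proof (rule ccontr)
        assume "\<not> ?thesis"
        then have "(\<Sum>t\<in>{t\<in>T. mul (mul s t) s = s}. x * f t * x) = 0"
          by (intro sum.neutral) blast
        with xs have "x = 0" by (rule trans)
        then show False using x0 by simp
      qed
      then obtain t where t: "t \<in> T" "mul (mul s t) s = s" "x * f t * x \<noteq> 0" by blast
      define g where "g = mul s t"
      have tS: "t \<in> S" using t fT by blast
      have gS: "g \<in> S" using gi_mulS[OF gi s(1) tS] g_def by simp
      have y: "f t \<in> Rs t" using t fT by blast
      have xy: "x * f t \<in> Rs g" using gi_mul[OF gi s(1) tS s(2) y] g_def by simp
      have xy0: "x * f t \<noteq> 0" using t(3) by auto
      have gs: "mul g s = s" using t g_def by simp
      have sz: "s \<noteq> z" using gi_nz[OF gi s(2) x0] .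
      have "x \<in> addsub_prod (Rs g) (Rs s)" using SG[OF gS s(1)] gs s by simp
      then obtain a w where aw: "a \<in> Rs g" "w \<in> Rs s" "a * w \<noteq> 0"
        using addsub_zero x0 by blast
      have "w \<in> addsub_prod (Rs g) (Rs s)" using SG[OF gS s(1)] gs aw by simp
      then obtain b c where bc: "b \<in> Rs g" "c \<in> Rs s" "a * (b * c) \<noteq> 0"
        using addsub_left aw(3) by blast
      have "mul (mul g g) s = mul g (mul g s)"
        using assoc_deg[OF gi gS gS s(1) aw(1) bc(1) bc(2)] bc(3) by (simp add: mult.assoc)
      then have "mul (mul g g) s = mul g s" using gs by simp
      then have gg: "mul g g = g" using cancR[of "mul g g" g s] gi_mulS[OF gi gS gS] gS s(1) gs sz by simp
      show "\<exists>y\<in>homog S Rs. x * y \<noteq> 0 \<and> x * y \<in> homog S Rs \<and> deg S Rs (x * y) \<in> idems S mul"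
      proof (intro bexI conjI)
        show "f t \<in> homog S Rs" using homI tS y by blast
        show "x * f t \<noteq> 0" by (rule xy0)
        show "x * f t \<in> homog S Rs" using homI gS xy by blast
        show "deg S Rs (x * f t) \<in> idems S mul"
          using deg_eq[OF gi gS xy xy0] gg gS unfolding idems_def by simp
      qed
    next
      fix e assume e: "e \<in> idems S mul"
      have eS: "e \<in> S" and ee: "mul e e = e" using idemsD[OF e] by auto
      show "vnr_subring (Rs e)" unfolding vnr_subring_def
      proof
        fix x assume xe: "x \<in> Rs e"
        show "\<exists>r\<in>Rs e. x = x * r * x"
        proof (cases "x = 0")
          case True then show ?thesis using gi_zero[OF gi eS] by auto
        next
          case False
          have ez: "e \<noteq> z" using gi_nz[OF gi xe False] .
          obtain r where r: "x = x * r * x" using V homI[OF eS xe] unfolding graded_vnr_def by blast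
          obtain f T where fT: "finite T" "T \<subseteq> S" "\<forall>t\<in>T. f t \<in> Rs t"
            and xs: "x = (\<Sum>t\<in>{t\<in>T. mul (mul e t) e = e}. x * f t * x)"
            using decomp[OF eS xe r] by blast
          have zero: "x * f t * x = 0" if "t \<in> {t\<in>T. mul (mul e t) e = e}" "t \<noteq> e" for t
          proof (rule ccontr)
            assume nz: "x * f t * x \<noteq> 0"
            have tS: "t \<in> S" using that fT by blast
            have "mul e t = e" using cancR[of "mul e t" e e] that gi_mulS[OF gi eS tS] eS ee ez by simp
            then have "t = e" using cancL[of t e e] tS eS ee ez by simp
            then show False using that by simp
          qed
          have "(\<Sum>t\<in>{t\<in>T. mul (mul e t) e = e}. x * f t * x) = (\<Sum>t\<in>{t\<in>T. mul (mul e t) e = e}. if t = e then x * f e * x else 0)"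
            by (rule sum.cong) (auto simp: zero)
          with xs have "x = (\<Sum>t\<in>{t\<in>T. mul (mul e t) e = e}. if t = e then x * f e * x else 0)"
            by (rule trans)
          also have "\<dots> = (if e \<in> {t\<in>T. mul (mul e t) e = e} then x * f e * x else 0)"
            using fT(1) by (simp add: sum.delta)
          finally have x2: "x = (if e \<in> {t\<in>T. mul (mul e t) e = e} then x * f e * x else 0)" .
          show ?thesis
          proof (cases "e \<in> {t\<in>T. mul (mul e t) e = e}")
            case True
            then have "x = x * f e * x" using x2 by (simp only: if_True)
            moreover have "f e \<in> Rs e" using True fT by blast
            ultimately show ?thesis by blast
          next
            case False
            then have "x = 0" using x2 by (simp only: if_False)
            then show ?thesis using \<open>x \<noteq> 0\<close> by blast
          qed
        qed
      qed
    qed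
  next
    assume H: "(\<forall>x\<in>homog S Rs. x \<noteq> 0 \<longrightarrow>
         (\<exists>y\<in>homog S Rs. x * y \<noteq> 0 \<and> x * y \<in> homog S Rs \<and>
             deg S Rs (x * y) \<in> idems S mul)) \<and>
      (\<forall>e\<in>idems S mul. vnr_subring (Rs e))"
    show "graded_vnr S Rs" unfolding graded_vnr_def
    proof
      fix x assume xh: "x \<in> homog S Rs"
      show "\<exists>r. x = x * r * x"
      proof (cases "x = 0")
        case True then show ?thesis by auto
      next
        case False
        obtain s where s: "s \<in> S" "x \<in> Rs s" using homE xh by blast
        have sz: "s \<noteq> z" using gi_nz[OF gi s(2) False] .
        obtain y where y: "y \<in> homog S Rs" "x * y \<noteq> 0" "deg S Rs (x * y) \<in> idems S mul"
          using H xh False by blast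
        obtain t where t: "t \<in> S" "y \<in> Rs t" using homE y(1) by blast
        define e where "e = mul s t"
        have eS: "e \<in> S" using gi_mulS[OF gi s(1) t(1)] e_def by simp
        have xy: "x * y \<in> Rs e" using gi_mul[OF gi s(1) t(1) s(2) t(2)] e_def by simp
        have "deg S Rs (x * y) = e" using deg_eq[OF gi eS xy y(2)] .
        then have e: "e \<in> idems S mul" using y(3) by simp
        have ee: "mul e e = e" using idemsD[OF e] by simp
        have ez: "e \<noteq> z" using gi_nz[OF gi xy y(2)] .
        have VR: "\<forall>a\<in>Rs e. \<exists>w\<in>Rs e. a = a * w * a" using H e unfolding vnr_subring_def by blast
        have Re: "\<And>a b. a \<in> Rs e \<Longrightarrow> b \<in> Rs e \<Longrightarrow> a * b \<in> Rs e"
          using gi_mul[OF gi eS eS] ee by metis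
        obtain e' f' u v where e': "e' \<in> idems S mul" and f': "f' \<in> idems S mul"
          and u: "is_unity (Rs e') u" and v: "is_unity (Rs f') v" and ux: "u * x = x" and xv: "x * v = x"
          using PU xh by blast
        have e'S: "e' \<in> S" and f'S: "f' \<in> S" using idemsD e' f' by auto
        have uR: "u \<in> Rs e'" and vR: "v \<in> Rs f'" using u v unfolding is_unity_def by auto
        have "mul e' e = e"
        proof -
          have "u * (x * y) \<in> Rs (mul e' e)" using gi_mul[OF gi e'S eS uR xy] .
          moreover have "u * (x * y) = x * y" using ux by (simp add: mult.assoc[symmetric])
          ultimately have "x * y \<in> Rs (mul e' e)" by simp
          then show ?thesis using deg_unique[OF gi _ eS _ xy y(2)] gi_mulS[OF gi e'S eS] by blast
        qed
        then have "e' = e" using cancR[of e' e e] e'S eS ee ez by simp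
        have "mul e' s = s"
        proof -
          have "u * x \<in> Rs (mul e' s)" using gi_mul[OF gi e'S s(1) uR s(2)] .
          then have "x \<in> Rs (mul e' s)" using ux by simp
          then show ?thesis using deg_unique[OF gi _ s(1) _ s(2) False] gi_mulS[OF gi e'S s(1)] by blast
        qed
        then have es: "mul e s = s" using \<open>e' = e\<close> by simp
        have sf: "mul s f' = s"
        proof -
          have "x * v \<in> Rs (mul s f')" using gi_mul[OF gi s(1) f'S s(2) vR] .
          then have "x \<in> Rs (mul s f')" using xv by simp
          then show ?thesis using deg_unique[OF gi _ s(1) _ s(2) False] gi_mulS[OF gi s(1) f'S] by blast
        qed
        have "u \<in> addsub_prod (Rs s) (Rs t)" using SG[OF s(1) t(1)] uR \<open>e' = e\<close> e_def by simp
        moreover have "u * x \<noteq> 0" using ux False by simp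
        ultimately have "\<not> (\<forall>a\<in>Rs s. \<forall>b\<in>Rs t. a * b * x = 0)" using addsub_right by blast
        then obtain a b where ab: "a \<in> Rs s" "b \<in> Rs t" "a * b * x \<noteq> 0" by blast
        have "mul (mul s t) s = mul s (mul t s)" using assoc_deg[OF gi s(1) t(1) s(1) ab(1) ab(2) s(2) ab(3)] .
        then have "mul s (mul t s) = s" using es e_def by simp
        then have ts: "mul t s = f'" using cancL[of "mul t s" f' s] gi_mulS[OF gi t(1) s(1)] f'S s(1) sf sz by simp
        have vA: "v \<in> addsub_prod (Rs t) (Rs s)" using SG[OF t(1) s(1)] ts vR by simp
        have claim: "\<exists>\<epsilon> r. \<epsilon> = x * r \<and> \<epsilon> \<in> Rs e \<and> \<epsilon> * \<epsilon> = \<epsilon> \<and> \<epsilon> * (x * p) = x * p"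
          if "p \<in> addsub_prod (Rs t) (Rs s)" for p
          using that
        proof (induction rule: addsub_prod.induct)
          case zero
          show ?case by (rule exI[of _ 0], rule exI[of _ 0]) (simp add: gi_zero[OF gi eS])
        next
          case (prod a b)
          define c where "c = x * a"
          have cR: "c \<in> Rs e" using gi_mul[OF gi s(1) t(1) s(2) prod(1)] c_def e_def by simp
          obtain w where w: "w \<in> Rs e" "c = c * w * c" using VR cR by blast
          show ?case
          proof (rule exI[of _ "c * w"], rule exI[of _ "a * w"], intro conjI)
            show "c * w = x * (a * w)" using c_def by (simp add: mult.assoc)
            show "c * w \<in> Rs e" using Re cR w by blast
            show "c * w * (c * w) = c * w" using w by (metis mult.assoc)
            show "c * w * (x * (a * b)) = x * (a * b)" using w c_def by (metis mult.assoc)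
          qed
        next
          case (diff p1 p2)
          obtain \<epsilon>1 r1 where h1: "\<epsilon>1 = x * r1" "\<epsilon>1 \<in> Rs e" "\<epsilon>1 * \<epsilon>1 = \<epsilon>1" "\<epsilon>1 * (x * p1) = x * p1"
            using diff.IH(1) by blast
          obtain \<epsilon>2 r2 where h2: "\<epsilon>2 = x * r2" "\<epsilon>2 \<in> Rs e" "\<epsilon>2 * \<epsilon>2 = \<epsilon>2" "\<epsilon>2 * (x * p2) = x * p2"
            using diff.IH(2) by blast
          define bb where "bb = \<epsilon>2 - \<epsilon>1 * \<epsilon>2"
          have "\<epsilon>1 * \<epsilon>2 \<in> Rs e" using Re h1(2) h2(2) by blast
          then have bR: "bb \<in> Rs e" unfolding bb_def using gi_diff[OF gi eS] h2(2) by blast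
          obtain w where w: "w \<in> Rs e" "bb = bb * w * bb" using VR bR by blast
          define ff where "ff = bb * w"
          define g where "g = \<epsilon>1 + ff - ff * \<epsilon>1"
          have ffR: "ff \<in> Rs e" using ff_def Re bR w by blast
          have "ff * \<epsilon>1 \<in> Rs e" using Re ffR h1(2) by blast
          then have gR: "g \<in> Rs e" unfolding g_def using gi_diff[OF gi eS] gi_add[OF gi eS] ffR h1(2) by blast
          note ic = idem_combine[OF h1(3) h2(3) bb_def w(2) ff_def g_def]
          define R where "R = r2 * w - r1 * \<epsilon>2 * w"
          have ffx: "ff = x * R" unfolding ff_def bb_def R_def h1(1) h2(1)
            by (simp add: left_diff_distrib right_diff_distrib mult.assoc)
          have gx: "g = x * (r1 + R - R * \<epsilon>1)" unfolding g_def ffx h1(1)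
            by (simp add: distrib_left left_diff_distrib right_diff_distrib mult.assoc)
          have "g * (x * p1) = x * p1" using ic(2) h1(4) by (metis mult.assoc)
          moreover have "g * (x * p2) = x * p2" using ic(3) h2(4) by (metis mult.assoc)
          ultimately have "g * (x * (p1 - p2)) = x * (p1 - p2)" by (simp add: right_diff_distrib)
          then show ?case using gx gR ic(1) by blast
        qed
        obtain \<epsilon> r where "\<epsilon> = x * r" "\<epsilon> * (x * v) = x * v" using claim[OF vA] by blast
        then have "x * r * x = x" using xv by simp
        then show ?thesis by metis
      qed
    qed
  qed
qed

end
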